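(* For every positive integer $t$ and every finite graph $G$ of degeneracy at most $t$, the hypergraph of closed neighborhoods in $G$ has a sample compression scheme of size $t+\lceil\log_2(t+1)\rceil+1$.
   Context: $G$ has degeneracy at most $t$ if there is a total order $\prec$ on $V(G)$ such that every vertex $v$ has at most $t$ neighbors $u$ with $u\prec v$. The hypergraph of closed neighborhoods in $G$ has vertex set $V(G)$ and hyperedges $B_G(c,1)=\{c\}\cup N_G(c)$ for $c\in V(G)$. For a hypergraph $H$ (finite $V(H)$, $E(H)\subseteq 2^{V(H)}$): a sample is a pair $(X^+,X^-)$ of subsets of $V(H)$ such that some hyperedge $e$ has $X^+\subseteq e$, $X^-\cap e=\emptyset$; $\mathcal{S}(H)$ is the set of samples; $S$ realizes $(X^+,X^-)$ if $X^+\subseteq S$, $S\cap X^-=\emptyset$; a subsample is a sample $(Y^+,Y^-)$ with $Y^\pm\subseteq X^\pm$, of size $|Y^+\cup Y^-|$. A sample compression scheme is $(\kappa,\rho)$ with $\kappa:\mathcal{S}(H)\to\mathcal{S}(H)\times\{0,1\}^*$ and $\rho:\mathcal{S}(H)\times\{0,1\}^*\to 2^{V(H)}$ such that for every sample the first component of $\kappa(X^+,X^-)$ is a subsample of it and $\rho(\kappa(X^+,X^-))$ realizes it; its size is $k_1+k_2$, $k_1$ the maximum subsample size and $k_2$ the maximum bitstring length output by $\kappa$. *)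

theory Defs
  imports Complex_Main
begin

definition finite_graph :: "'a set \<Rightarrow> ('a \<Rightarrow> 'a \<Rightarrow> bool) \<Rightarrow> bool" where
  "finite_graph V E \<longleftrightarrow> finite V \<and> (\<forall>u v. E u v \<longrightarrow> u \<in> V \<and> v \<in> V)
     \<and> (\<forall>u v. E u v \<longrightarrow> E v u) \<and> (\<forall>v. \<not> E v v)"

definition degeneracy_le :: "'a set \<Rightarrow> ('a \<Rightarrow> 'a \<Rightarrow> bool) \<Rightarrow> nat \<Rightarrow> bool" where
  "degeneracy_le V E t \<longleftrightarrow> (\<exists>r. strict_linear_order_on V r \<and>
     (\<forall>v\<in>V. card {u \<in> V. E u v \<and> (u, v) \<in> r} \<le> t))"

definition closed_nbhd :: "'a set \<Rightarrow> ('a \<Rightarrow> 'a \<Rightarrow> bool) \<Rightarrow> 'a \<Rightarrow> 'a set" where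
  "closed_nbhd V E c = insert c {u \<in> V. E c u}"

definition closed_nbhd_edges :: "'a set \<Rightarrow> ('a \<Rightarrow> 'a \<Rightarrow> bool) \<Rightarrow> 'a set set" where
  "closed_nbhd_edges V E = closed_nbhd V E ` V"

definition samples :: "'a set \<Rightarrow> 'a set set \<Rightarrow> ('a set \<times> 'a set) set" where
  "samples HV HE = {(Xp, Xm). Xp \<subseteq> HV \<and> Xm \<subseteq> HV \<and>
     (\<exists>e\<in>HE. Xp \<subseteq> e \<and> Xm \<inter> e = {})}"

definition realizes :: "'a set \<Rightarrow> 'a set \<times> 'a set \<Rightarrow> bool" where
  "realizes S X \<longleftrightarrow> fst X \<subseteq> S \<and> S \<inter> snd X = {}"

definition is_subsample :: "'a set \<Rightarrow> 'a set set \<Rightarrow> 'a set \<times> 'a set \<Rightarrow> 'a set \<times> 'a set \<Rightarrow> bool" where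
  "is_subsample HV HE Y X \<longleftrightarrow> Y \<in> samples HV HE \<and> fst Y \<subseteq> fst X \<and> snd Y \<subseteq> snd X"

definition is_compression_scheme ::
  "'a set \<Rightarrow> 'a set set \<Rightarrow> ('a set \<times> 'a set \<Rightarrow> ('a set \<times> 'a set) \<times> bool list)
   \<Rightarrow> (('a set \<times> 'a set) \<times> bool list \<Rightarrow> 'a set) \<Rightarrow> bool" where
  "is_compression_scheme HV HE kappa rho \<longleftrightarrow>
     (\<forall>Y\<in>samples HV HE. \<forall>b. rho (Y, b) \<subseteq> HV) \<and>
     (\<forall>X\<in>samples HV HE. is_subsample HV HE (fst (kappa X)) X \<and> realizes (rho (kappa X)) X)"

text \<open>Size k1 + k2: k1 = max subsample size, k2 = max bitstring length.
  A scheme "of size s" is one whose size is at most s (bitstrings can be padded).\<close>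
definition scheme_size_le ::
  "'a set \<Rightarrow> 'a set set \<Rightarrow> ('a set \<times> 'a set \<Rightarrow> ('a set \<times> 'a set) \<times> bool list) \<Rightarrow> nat \<Rightarrow> bool" where
  "scheme_size_le HV HE kappa s \<longleftrightarrow> (\<exists>k1 k2. k1 + k2 \<le> s \<and>
     (\<forall>X\<in>samples HV HE. card (fst (fst (kappa X)) \<union> snd (fst (kappa X))) \<le> k1
        \<and> length (snd (kappa X)) \<le> k2))"

definition has_scheme_of_size :: "'a set \<Rightarrow> 'a set set \<Rightarrow> nat \<Rightarrow> bool" where
  "has_scheme_of_size HV HE s \<longleftrightarrow>
     (\<exists>kappa rho. is_compression_scheme HV HE kappa rho \<and> scheme_size_le HV HE kappa s)"

end

theory Submission
  imports Defs
begin

lemma pow_bound: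
  fixes t :: nat
  shows "t + 1 \<le> 2 ^ nat (ceiling (log 2 (real t + 1)))"
proof -
  define n where "n = nat (ceiling (log 2 (real t + 1)))"
  have l0: "log 2 (real t + 1) \<ge> 0" by simp
  have "log 2 (real t + 1) \<le> real n" unfolding n_def using l0
    by (metis ceiling_le_zero le_nat_iff le_of_int_ceiling nat_le_0 of_nat_nat order_trans real_nat_ceiling_ge)
  hence "2 powr log 2 (real t + 1) \<le> 2 powr real n" by (intro powr_mono) auto
  hence "real t + 1 \<le> 2 ^ n" by (simp add: powr_realpow)
  hence "real (t + 1) \<le> real (2 ^ n)" by simp
  thus ?thesis unfolding n_def by linarith
qed

lemma card_bool_lists: "card {bs :: bool list. length bs = n} = 2 ^ n"
proof -
  have "card {xs :: bool list. set xs \<subseteq> UNIV \<and> length xs = n} = (card (UNIV :: bool set)) ^ n"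
    by (rule card_lists_length_eq) simp
  thus ?thesis by simp
qed

lemma finite_bool_lists: "finite {bs :: bool list. length bs = n}"
  using finite_lists_length_eq[of "UNIV :: bool set" n] by simp

theorem theorem1p5:
  fixes V :: "'a set" and E :: "'a \<Rightarrow> 'a \<Rightarrow> bool" and t :: nat
  assumes "t \<ge> 1"
    and "finite_graph V E"
    and "degeneracy_le V E t"
  shows "has_scheme_of_size V (closed_nbhd_edges V E)
           (t + nat (ceiling (log 2 (real t + 1))) + 1)"
proof -
  define n where "n = nat (ceiling (log 2 (real t + 1)))"
  define HE where "HE = closed_nbhd_edges V E"
  define N where "N = closed_nbhd V E"
  have fin: "finite V" and Ein: "\<And>u v. E u v \<Longrightarrow> u \<in> V \<and> v \<in> V"
    and Esym: "\<And>u v. E u v \<Longrightarrow> E v u"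
    using assms(2) unfolding finite_graph_def by auto
  obtain r where slo: "strict_linear_order_on V r"
    and bk: "\<And>v. v \<in> V \<Longrightarrow> card {u \<in> V. E u v \<and> (u, v) \<in> r} \<le> t"
    using assms(3) unfolding degeneracy_le_def by blast
  have tot: "\<And>x y. x \<in> V \<Longrightarrow> y \<in> V \<Longrightarrow> x \<noteq> y \<Longrightarrow> (x, y) \<in> r \<or> (y, x) \<in> r"
    using slo unfolding strict_linear_order_on_def total_on_def by blast
  define cand where "cand x = insert x {u \<in> V. E u x \<and> (u, x) \<in> r}" for x
  have cand_card: "card (cand x) \<le> card {bs :: bool list. length bs = n}" if "x \<in> V" for x
  proof -
    have "card (cand x) \<le> card {u \<in> V. E u x \<and> (u, x) \<in> r} + 1"
      unfolding cand_def using fin by (simp add: card_insert_le_m1 card_insert_if)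
    also have "\<dots> \<le> t + 1" using bk[OF that] by simp
    also have "\<dots> \<le> 2 ^ n" unfolding n_def by (rule pow_bound)
    finally show ?thesis by (simp add: card_bool_lists)
  qed
  have "\<forall>x. \<exists>f. x \<in> V \<longrightarrow> (f ` cand x \<subseteq> {bs :: bool list. length bs = n} \<and> inj_on f (cand x))"
  proof
    fix x
    show "\<exists>f. x \<in> V \<longrightarrow> (f ` cand x \<subseteq> {bs :: bool list. length bs = n} \<and> inj_on f (cand x))"
    proof (cases "x \<in> V")
      case True
      have "finite (cand x)" unfolding cand_def using fin by simp
      then obtain f where "f ` cand x \<subseteq> {bs :: bool list. length bs = n}" "inj_on f (cand x)"
        using card_le_inj[OF _ finite_bool_lists cand_card[OF True]] by blast
      thus ?thesis by blast
    qed simp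
  qed
  then obtain F where F: "\<And>x. x \<in> V \<Longrightarrow> F x ` cand x \<subseteq> {bs :: bool list. length bs = n} \<and> inj_on (F x) (cand x)"
    by metis
  define kappa where "kappa X = (if card (fst X) \<le> t then ((fst X, {} :: 'a set), [False])
     else (let c = SOME c. c \<in> V \<and> fst X \<subseteq> N c \<and> snd X \<inter> N c = {};
               x = SOME x. x \<in> fst X \<and> c \<in> cand x in (({x}, {} :: 'a set), True # F x c)))"
    for X :: "'a set \<times> 'a set"
  define rho where "rho Yb = (if snd Yb = [] \<or> hd (snd Yb) = False
       then V \<inter> \<Inter>{B \<in> HE. fst (fst Yb) \<subseteq> B}
       else (let x = SOME x. x \<in> fst (fst Yb);
                 c = the_inv_into (cand x) (F x) (tl (snd Yb)) in N c \<inter> V))"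
    for Yb :: "('a set \<times> 'a set) \<times> bool list"
  have NHE: "c \<in> V \<Longrightarrow> N c \<in> HE" for c unfolding N_def HE_def closed_nbhd_edges_def by simp
  have main: "is_subsample V HE (fst (kappa X)) X \<and> realizes (rho (kappa X)) X
     \<and> card (fst (fst (kappa X)) \<union> snd (fst (kappa X))) \<le> t \<and> length (snd (kappa X)) \<le> n + 1"
    if X: "X \<in> samples V HE" for X
  proof -
    obtain P M where PM: "X = (P, M)" by force
    have PV: "P \<subseteq> V" and MV: "M \<subseteq> V" using X PM unfolding samples_def by auto
    have ex: "\<exists>c. c \<in> V \<and> P \<subseteq> N c \<and> M \<inter> N c = {}"
      using X PM unfolding samples_def HE_def closed_nbhd_edges_def N_def by auto
    show ?thesis
    proof (cases "card P \<le> t")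
      case True
      then have k: "kappa X = ((P, {}), [False])" unfolding kappa_def PM by simp
      obtain c where c: "c \<in> V" "P \<subseteq> N c" "M \<inter> N c = {}" using ex by blast
      have sub: "is_subsample V HE (P, {}) X"
        unfolding is_subsample_def samples_def PM using PV c NHE by auto
      have r: "rho (kappa X) = V \<inter> \<Inter>{B \<in> HE. P \<subseteq> B}" unfolding k rho_def by simp
      have "realizes (V \<inter> \<Inter>{B \<in> HE. P \<subseteq> B}) (P, M)"
        unfolding realizes_def using PV c NHE by auto
      hence "realizes (rho (kappa X)) X" using r PM by simp
      thus ?thesis using sub k True by simp
    next
      case False
      define c where "c = (SOME c. c \<in> V \<and> P \<subseteq> N c \<and> M \<inter> N c = {})"
      have c: "c \<in> V" "P \<subseteq> N c" "M \<inter> N c = {}" using someI_ex[OF ex] unfolding c_def by auto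
      have exx: "\<exists>x. x \<in> P \<and> c \<in> cand x"
      proof (rule ccontr)
        assume "\<not> ?thesis"
        hence "P \<subseteq> {u \<in> V. E u c \<and> (u, c) \<in> r}"
        proof -
          assume nx: "\<not> (\<exists>x. x \<in> P \<and> c \<in> cand x)"
          show ?thesis
          proof
            fix x assume xP: "x \<in> P"
            hence "x \<noteq> c" using nx unfolding cand_def by auto
            hence Ecx: "E c x" using c(2) xP unfolding N_def closed_nbhd_def by auto
            have "(c, x) \<notin> r" using nx xP Ecx c(1) unfolding cand_def by auto
            hence "(x, c) \<in> r" using tot[of x c] \<open>x \<noteq> c\<close> xP PV c(1) by auto
            thus "x \<in> {u \<in> V. E u c \<and> (u, c) \<in> r}" using Esym[OF Ecx] xP PV by auto
          qed
        qed
        hence "card P \<le> card {u \<in> V. E u c \<and> (u, c) \<in> r}"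
          by (rule card_mono[rotated]) (use fin in simp)
        with bk[OF c(1)] False show False by simp
      qed
      define x where "x = (SOME x. x \<in> P \<and> c \<in> cand x)"
      have x: "x \<in> P" "c \<in> cand x" using someI_ex[OF exx] unfolding x_def by auto
      have xV: "x \<in> V" using x PV by auto
      have k: "kappa X = (({x}, {}), True # F x c)"
        unfolding kappa_def PM using False by (simp add: c_def[symmetric] x_def[symmetric] Let_def)
      have len: "length (F x c) = n" using F[OF xV] x(2) by auto
      have inv: "the_inv_into (cand x) (F x) (F x c) = c"
        using F[OF xV] x(2) by (simp add: the_inv_into_f_f)
      have r: "rho (kappa X) = N c \<inter> V" unfolding k rho_def using inv by (simp add: Let_def)
      have sub: "is_subsample V HE ({x}, {}) X"
        unfolding is_subsample_def samples_def PM using xV x c NHE by auto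
      have "realizes (N c \<inter> V) (P, M)"
        unfolding realizes_def using PV c by auto
      hence "realizes (rho (kappa X)) X" using r PM by simp
      thus ?thesis using sub k len assms(1) by simp
    qed
  qed
  have "is_compression_scheme V HE kappa rho"
    unfolding is_compression_scheme_def
  proof (intro conjI ballI allI)
    fix Y b show "rho (Y, b) \<subseteq> V" unfolding rho_def N_def by (auto simp: Let_def)
  next
    fix X assume "X \<in> samples V HE"
    thus "is_subsample V HE (fst (kappa X)) X" using main by blast
  next
    fix X assume "X \<in> samples V HE"
    thus "realizes (rho (kappa X)) X" using main by blast
  qed
  moreover have "scheme_size_le V HE kappa (t + n + 1)"
    unfolding scheme_size_le_def
    by (rule exI[of _ t], rule exI[of _ "n + 1"]) (use main in auto)
  ultimately show ?thesis unfolding has_scheme_of_size_def HE_def n_def by blast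
qed

end
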